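(* For every $d\in\mathbb{N}$ and every $2\le i\le d$, $$\mu_i(T_d)\leqslant\frac12+\sum_{j=0}^{i-2}\frac{d-j}{d-j+1}.$$
   Context: $T_d=\operatorname{conv}(-\mathbb{1}_d,e_1,\dots,e_d)\subseteq\mathbb{R}^d$ is the standard terminal simplex. For a convex body $K\subseteq\mathbb{R}^d$ and $i\in\{1,\dots,d\}$, $\mu_i(K)=\min\{\mu\ge0:(\mu K+\mathbb{Z}^d)\cap U\ne\emptyset$ for every $(d-i)$-dimensional affine subspace $U\subseteq\mathbb{R}^d\}$. *)

theory Defs
  imports "HOL-Analysis.Analysis"
begin

definition int_lattice :: "(real ^ 'n) set" where
  "int_lattice = {z. \<forall>k. z $ k \<in> \<int>}"

definition terminal_simplex :: "(real ^ 'n) set" where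
  "terminal_simplex = convex hull (insert (- (\<chi> k. 1)) (range (\<lambda>k. axis k 1)))"

text \<open>The \<open>i\<close>-th covering minimum: the minimum \<open>\<mu> \<ge> 0\<close> such that \<open>\<mu>K + \<int>^d\<close> meets every
  \<open>(d-i)\<close>-dimensional affine subspace; rendered as the infimum of that set (which is attained).\<close>
definition covering_minimum :: "nat \<Rightarrow> (real ^ 'n) set \<Rightarrow> real" where
  "covering_minimum i K = Inf {\<mu>. \<mu> \<ge> 0 \<and>
      (\<forall>U. affine U \<and> aff_dim U = int (CARD('n) - i) \<longrightarrow>
         {\<mu> *\<^sub>R x + z | x z. x \<in> K \<and> z \<in> int_lattice} \<inter> U \<noteq> {})}"

end

theory Submission imports Defs begin

lemma T_point:
  fixes w :: "'n::finite \<Rightarrow> real"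
  assumes "w0 \<ge> 0" "\<And>k. w k \<ge> 0" "w0 + sum w UNIV = 1"
  shows "(\<chi> k. w k - w0) \<in> (terminal_simplex :: (real^'n) set)"
proof -
  let ?a = "\<lambda>j::'n option. case j of None \<Rightarrow> w0 | Some k \<Rightarrow> w k"
  let ?y = "\<lambda>j::'n option. case j of None \<Rightarrow> - (\<chi> k. 1) | Some k \<Rightarrow> axis k (1::real)"
  have U: "(UNIV :: 'n option set) = insert None (Some ` UNIV)" by (rule UNIV_option_conv)
  have s1: "sum ?a UNIV = 1"
    unfolding U using assms(3) by (simp add: sum.reindex)
  have "(\<Sum>j\<in>UNIV. ?a j *\<^sub>R ?y j) \<in> terminal_simplex"
    unfolding terminal_simplex_def
  proof (rule convex_sum)
    show "convex (convex hull (insert (- (\<chi> k. 1)) (range (\<lambda>k. axis k 1))))" by simp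
    fix i :: "'n option" show "0 \<le> ?a i" using assms by (cases i) auto
    show "?y i \<in> convex hull (insert (- (\<chi> k. 1)) (range (\<lambda>k. axis k 1)))"
      by (cases i) (auto intro: hull_inc)
  qed (use s1 in auto)
  moreover have "(\<Sum>j\<in>UNIV. ?a j *\<^sub>R ?y j) = (\<chi> k. w k - w0)"
    unfolding U by (simp add: sum.reindex vec_eq_iff axis_def if_distrib sum.delta cong: if_cong)
  ultimately show ?thesis by simp
qed

lemma T_vertex: "axis k 1 \<in> (terminal_simplex :: (real^'n::finite) set)"
  unfolding terminal_simplex_def by (auto intro: hull_inc)

lemma T_vertex0: "- (\<chi> k. 1) \<in> (terminal_simplex :: (real^'n::finite) set)"
  unfolding terminal_simplex_def by (auto intro: hull_inc)

lemma T_convex: "convex (terminal_simplex :: (real^'n::finite) set)"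
  unfolding terminal_simplex_def by simp

lemma conv_comb:
  assumes "x \<in> (terminal_simplex :: (real^'n::finite) set)" "y \<in> terminal_simplex"
    "(\<alpha>::real) \<ge> 0" "\<beta> \<ge> 0" "\<alpha> + \<beta> > 0"
  shows "\<exists>t\<in>terminal_simplex. \<alpha> *\<^sub>R x + \<beta> *\<^sub>R y = (\<alpha> + \<beta>) *\<^sub>R t"
proof (intro bexI)
  let ?t = "(\<alpha>/(\<alpha>+\<beta>)) *\<^sub>R x + (\<beta>/(\<alpha>+\<beta>)) *\<^sub>R y"
  show "?t \<in> terminal_simplex"
    using T_convex assms by (intro convexD) (auto simp: add_divide_distrib[symmetric])
  show "\<alpha> *\<^sub>R x + \<beta> *\<^sub>R y = (\<alpha> + \<beta>) *\<^sub>R ?t"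
    using assms by (simp add: scaleR_add_right)
qed

lemma lat_add: "x \<in> int_lattice \<Longrightarrow> y \<in> int_lattice \<Longrightarrow> x + y \<in> int_lattice"
  unfolding int_lattice_def by auto
lemma lat_diff: "x \<in> int_lattice \<Longrightarrow> y \<in> int_lattice \<Longrightarrow> x - y \<in> int_lattice"
  unfolding int_lattice_def by auto
lemma lat_0: "0 \<in> int_lattice"
  unfolding int_lattice_def by auto
lemma lat_axis: "of_int n *\<^sub>R axis k (1::real) \<in> int_lattice"
  unfolding int_lattice_def by (auto simp: axis_def)
lemma lat_scale: "x \<in> int_lattice \<Longrightarrow> of_int n *\<^sub>R x \<in> int_lattice"
  unfolding int_lattice_def by auto
lemma lat_one: "(\<chi> k. (1::real)) \<in> (int_lattice :: (real^'n::finite) set)"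
  unfolding int_lattice_def by auto

definition Lam :: "nat \<Rightarrow> nat \<Rightarrow> real" where
  "Lam d j = (\<Sum>l<j. (real d - real l) / (real d - real l + 1))"

lemma fill_step_point:
  fixes K :: "'n::finite set"
  assumes cK: "c \<notin> K" "finite K"
    and m: "m = real CARD('n) - real (card K)"
    and sl: "-1/m \<le> \<sigma>" "\<sigma> \<le> 1"
  shows "(if \<sigma> \<ge> 0 then (\<chi> k. if k = c then \<sigma> else 0)
          else (\<chi> k. if k \<in> insert c K then \<sigma> else 0)) \<in> (terminal_simplex :: (real^'n) set)"
proof -
  have cardle: "card (insert c K) \<le> CARD('n)" by (rule card_mono) auto
  hence m1: "m \<ge> 1" using cK m by simp
  define d where "d = real CARD('n)"
  show ?thesis
  proof (cases "\<sigma> \<ge> 0")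
    case True
    let ?vv = "(1-\<sigma>)/(d+1)"
    let ?w = "\<lambda>k. (1-\<sigma>)/(d+1) + (if k = c then \<sigma> else 0)"
    have "(\<chi> k. ?w k - ?vv) \<in> (terminal_simplex :: (real^'n) set)"
    proof (rule T_point)
      show "?vv \<ge> 0" using sl d_def by simp
      show "\<And>k. ?w k \<ge> 0" using sl True d_def by simp
      have "sum ?w UNIV = d * ((1-\<sigma>)/(d+1)) + \<sigma>"
        by (simp add: sum.distrib d_def)
      thus "?vv + sum ?w UNIV = 1" using d_def by (simp add: field_simps)
    qed
    moreover have "(\<chi> k. ?w k - ?vv) = (\<chi> k. if k = c then \<sigma> else 0)"
      by (simp add: vec_eq_iff)
    ultimately show ?thesis using True by simp
  next
    case False
    let ?vv = "-\<sigma> + (1+m*\<sigma>)/(d+1)"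
    let ?w = "\<lambda>k. (1+m*\<sigma>)/(d+1) + (if k \<notin> insert c K then -\<sigma> else 0)"
    have "m * (-1/m) \<le> m*\<sigma>" using mult_left_mono[OF sl(1), of m] m1 by linarith
    hence mg: "1 + m*\<sigma> \<ge> 0" using m1 by simp
    have cc: "card (- insert c K) = CARD('n) - card (insert c K)"
      using card_Diff_subset[of "insert c K" UNIV] cK by (simp add: Compl_eq_Diff_UNIV)
    have cc2: "real (card (- insert c K)) = m - 1"
      using cc cardle cK m by (simp add: of_nat_diff)
    have cc3: "real (card {k. k \<noteq> c \<and> k \<notin> K}) = m - 1"
      using cc2 by (simp add: Compl_eq set_diff_eq)
    have "(\<chi> k. ?w k - ?vv) \<in> (terminal_simplex :: (real^'n) set)"
    proof (rule T_point)
      have q: "0 \<le> (1+m*\<sigma>)/(d+1)" using mg d_def by simp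
      show "?vv \<ge> 0" using q False by linarith
      show "\<And>k. ?w k \<ge> 0" using q False by simp
      have "sum ?w UNIV = d * ((1+m*\<sigma>)/(d+1)) + (m-1) * (-\<sigma>)"
        by (simp add: sum.distrib d_def sum.If_cases cc3)
      thus "?vv + sum ?w UNIV = 1" using d_def by (simp add: field_simps)
    qed
    moreover have "(\<chi> k. ?w k - ?vv) = (\<chi> k. if k \<in> insert c K then \<sigma> else 0)"
      by (simp add: vec_eq_iff)
    ultimately show ?thesis using False by simp
  qed
qed

lemma fill:
  fixes K :: "'n::finite set"
  assumes "finite K"
  shows "\<forall>r::real^'n. (\<forall>k. k \<notin> K \<longrightarrow> r$k = 0) \<longrightarrow>
    (\<exists>z\<in>int_lattice. \<exists>t\<in>terminal_simplex. r - z = Lam CARD('n) (card K) *\<^sub>R t)"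
  using assms
proof (induction K rule: finite_induct)
  case empty
  show ?case
  proof (intro allI impI)
    fix r :: "real^'n" assume "\<forall>k. k \<notin> {} \<longrightarrow> r $ k = 0"
    hence "r = 0" by (simp add: vec_eq_iff)
    thus "\<exists>z\<in>int_lattice. \<exists>t\<in>terminal_simplex. r - z = Lam CARD('n) (card {}) *\<^sub>R t"
      using lat_0 T_vertex by (auto simp: Lam_def)
  qed
next
  case (insert c K)
  show ?case
  proof (intro allI impI)
    fix r :: "real^'n" assume r: "\<forall>k. k \<notin> insert c K \<longrightarrow> r $ k = 0"
    define m where "m = real CARD('n) - real (card K)"
    have cardle: "card (insert c K) \<le> CARD('n)" by (rule card_mono) auto
    hence m1: "m \<ge> 1" using insert m_def by simp
    define lam where "lam = m / (m+1)"
    have lam0: "lam > 0" using m1 lam_def by simp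
    define n where "n = \<lfloor>r$c + 1/(m+1)\<rfloor>"
    define s where "s = r$c - n"
    have s1: "-1/(m+1) \<le> s" using s_def n_def by linarith
    have s2: "s < 1 - 1/(m+1)" unfolding s_def n_def by linarith
    define \<sigma> where "\<sigma> = s * (m+1) / m"
    have lamsig: "lam * \<sigma> = s"
    proof -
      have "m + 1 \<noteq> 0" "m \<noteq> 0" using m1 by auto
      thus ?thesis unfolding lam_def \<sigma>_def by simp
    qed
    have sg1: "-1/m \<le> \<sigma>"
    proof -
      have "s * (m+1) \<ge> -1" using s1 m1 by (simp add: field_simps)
      thus ?thesis using m1 \<sigma>_def by (simp add: field_simps)
    qed
    have sg2: "\<sigma> \<le> 1"
    proof -
      have "s * (m+1) \<le> m" using s2 m1 by (simp add: field_simps)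
      hence "\<sigma> * m \<le> 1 * m" using m1 \<sigma>_def by simp
      thus ?thesis using m1 by (meson mult_right_le_imp_le zero_less_one less_le_trans)
    qed
    define y :: "real^'n" where "y = (if \<sigma> \<ge> 0 then (\<chi> k. if k = c then \<sigma> else 0)
          else (\<chi> k. if k \<in> insert c K then \<sigma> else 0))"
    have yT: "y \<in> terminal_simplex"
      unfolding y_def using fill_step_point[OF insert(2,1) m_def sg1 sg2] .
    have yc: "y$c = \<sigma>" by (simp add: y_def)
    have yo: "\<And>k. k \<notin> insert c K \<Longrightarrow> y$k = 0" by (auto simp: y_def)
    define r' where "r' = r - of_int n *\<^sub>R axis c 1 - lam *\<^sub>R y"
    have r'0: "\<forall>k. k \<notin> K \<longrightarrow> r'$k = 0"
    proof (intro allI impI)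
      fix k assume k: "k \<notin> K"
      show "r'$k = 0"
      proof (cases "k = c")
        case True thus ?thesis using lamsig yc s_def by (simp add: r'_def axis_def)
      next
        case False thus ?thesis using r yo k by (simp add: r'_def axis_def)
      qed
    qed
    obtain z' t' where z': "z' \<in> int_lattice" and t': "t' \<in> terminal_simplex"
      and e: "r' - z' = Lam CARD('n) (card K) *\<^sub>R t'"
      using insert(3) r'0 by blast
    have L0: "Lam CARD('n) (card K) \<ge> 0"
    proof -
      have "\<And>l. l < card K \<Longrightarrow> (real CARD('n) - real l) / (real CARD('n) - real l + 1) \<ge> 0"
        using cardle insert(1,2) by auto
      thus ?thesis unfolding Lam_def by (intro sum_nonneg) auto
    qed
    have LS: "Lam CARD('n) (card (insert c K)) = Lam CARD('n) (card K) + lam"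
      using insert(1,2) by (simp add: Lam_def lam_def m_def)
    obtain t where t: "t \<in> terminal_simplex" and
      te: "Lam CARD('n) (card K) *\<^sub>R t' + lam *\<^sub>R y = (Lam CARD('n) (card K) + lam) *\<^sub>R t"
      using conv_comb[OF t' yT L0 less_imp_le[OF lam0]] L0 lam0 by auto
    have "r - (z' + of_int n *\<^sub>R axis c 1) = (r' - z') + lam *\<^sub>R y"
      by (simp add: r'_def algebra_simps)
    also have "\<dots> = Lam CARD('n) (card (insert c K)) *\<^sub>R t" using e te LS by simp
    finally show "\<exists>z\<in>int_lattice. \<exists>t\<in>terminal_simplex. r - z = Lam CARD('n) (card (insert c K)) *\<^sub>R t"
      using t z' lat_add lat_axis by blast
  qed
qed

lemma base_core:
  fixes a :: "real^'n::finite"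
  assumes pl: "pl \<in> terminal_simplex" and ph: "ph \<in> terminal_simplex"
    and z: "z \<in> int_lattice" and cz: "a \<bullet> z > 0"
    and gap: "a \<bullet> ph - a \<bullet> pl \<ge> 2 * (a \<bullet> z)"
  shows "\<exists>p z'. p \<in> terminal_simplex \<and> z' \<in> int_lattice \<and> a \<bullet> ((1/2) *\<^sub>R p + z') = b"
proof -
  define lo where "lo = (a \<bullet> pl) / 2"
  define hi where "hi = (a \<bullet> ph) / 2"
  define c where "c = a \<bullet> z"
  have hl: "hi - lo \<ge> c" using gap lo_def hi_def c_def by simp
  have c0: "c > 0" using cz c_def by simp
  define n where "n = \<lceil>(b - hi) / c\<rceil>"
  have n1: "real_of_int n \<ge> (b - hi)/c" using n_def by simp
  have n2: "real_of_int n < (b - hi)/c + 1" using n_def by linarith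
  have "real_of_int n * c \<ge> b - hi" using n1 c0 by (simp add: divide_le_eq)
  moreover have "real_of_int n * c < b - hi + c" using n2 c0
    by (simp add: less_divide_eq field_simps)
  ultimately have b1: "lo \<le> b - n * c" "b - n * c \<le> hi" using hl by linarith+
  define t where "t = (b - n*c - lo) / (hi - lo)"
  have hlp: "hi - lo > 0" using hl c0 by simp
  have t0: "0 \<le> t" "t \<le> 1" using b1 hlp t_def by (auto simp: divide_le_eq)
  define p where "p = (1 - t) *\<^sub>R pl + t *\<^sub>R ph"
  have pT: "p \<in> terminal_simplex" unfolding p_def
    using T_convex pl ph t0 by (intro convexD) auto
  have "a \<bullet> ((1/2) *\<^sub>R p) = (1-t) * lo + t * hi"
    unfolding p_def lo_def hi_def by (simp add: inner_add_right inner_diff_right field_simps)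
  also have "\<dots> = b - n * c" using hlp t_def by (simp add: field_simps)
  finally have "a \<bullet> ((1/2) *\<^sub>R p + of_int n *\<^sub>R z) = b"
    by (simp add: inner_add_right c_def field_simps)
  thus ?thesis using pT lat_scale[OF z] by blast
qed

lemma base:
  fixes a :: "real^'n::finite"
  assumes a0: "a \<noteq> 0"
  shows "\<exists>p z'. p \<in> terminal_simplex \<and> z' \<in> int_lattice \<and> a \<bullet> ((1/2) *\<^sub>R p + z') = b"
proof -
  define Vt :: "(real^'n) set" where "Vt = insert (- (\<chi> k. 1)) (range (\<lambda>k. axis k 1))"
  have VtT: "\<And>v. v \<in> Vt \<Longrightarrow> v \<in> terminal_simplex" using T_vertex T_vertex0 Vt_def by auto
  have VtL: "\<And>v. v \<in> Vt \<Longrightarrow> v \<in> int_lattice"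
    using lat_one lat_axis[of 1] by (auto simp: Vt_def int_lattice_def)
  have ax: "\<And>k. a \<bullet> axis k 1 = a $ k" by (simp add: cart_eq_inner_axis inner_commute)
  have m1: "a \<bullet> (- (\<chi> k. 1)) = - (\<Sum>k\<in>UNIV. a $ k)"
    by (simp add: inner_vec_def sum_negf)
  define F where "F = {v \<in> Vt. a \<bullet> v \<noteq> 0}"
  have fin: "finite F" unfolding F_def Vt_def by simp
  obtain k0 where "a $ k0 \<noteq> 0" using a0 by (auto simp: vec_eq_iff)
  hence "axis k0 1 \<in> F" unfolding F_def Vt_def using ax by auto
  hence Fne: "F \<noteq> {}" by auto
  define g where "g = (\<lambda>v. \<bar>a \<bullet> v\<bar>)"
  have "Min (g ` F) \<in> g ` F" using fin Fne by simp
  then obtain v0 where v0: "v0 \<in> F" "g v0 = Min (g ` F)" by auto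
  have v0min: "\<And>v. v \<in> F \<Longrightarrow> g v0 \<le> g v" using v0 fin by simp
  define c where "c = a \<bullet> v0"
  have c0: "c \<noteq> 0" using v0 F_def c_def by auto
  have "\<exists>v\<in>Vt. c * (a \<bullet> v) < 0"
  proof (rule ccontr)
    assume "\<not> ?thesis"
    hence nn: "\<And>v. v \<in> Vt \<Longrightarrow> c * (a \<bullet> v) \<ge> 0" by force
    have e1: "\<And>k. c * a $ k \<ge> 0" using nn[of "axis _ 1"] ax unfolding Vt_def by auto
    have "c * (a \<bullet> (- (\<chi> k. 1))) \<ge> 0" using nn[of "- (\<chi> k. 1)"] Vt_def by blast
    hence "(\<Sum>k\<in>UNIV. c * a $ k) \<le> 0" using m1 by (simp add: sum_distrib_left)
    moreover have "(\<Sum>k\<in>UNIV. c * a $ k) \<ge> 0" using e1 by (simp add: sum_nonneg)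
    ultimately have "(\<Sum>k\<in>UNIV. c * a $ k) = 0" by linarith
    hence "\<forall>k\<in>UNIV. c * a $ k = 0" using e1 sum_nonneg_eq_0_iff[of UNIV "\<lambda>k. c * a $ k"] by simp
    hence "a = 0" using c0 by (simp add: vec_eq_iff)
    thus False using a0 by simp
  qed
  then obtain v1 where v1: "v1 \<in> Vt" "c * (a \<bullet> v1) < 0" by blast
  have "v1 \<in> F" using v1 F_def by auto
  hence g1: "\<bar>c\<bar> \<le> \<bar>a \<bullet> v1\<bar>" using v0min g_def c_def by auto
  have v0V: "v0 \<in> Vt" using v0 F_def by auto
  show ?thesis
  proof (cases "c > 0")
    case True
    have "a \<bullet> v1 < 0" using v1 True by (simp add: mult_less_0_iff)
    show ?thesis
    proof (rule base_core[OF VtT[OF v1(1)] VtT[OF v0V] VtL[OF v0V]])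
      show "0 < a \<bullet> v0" using True c_def by simp
      show "2 * (a \<bullet> v0) \<le> a \<bullet> v0 - a \<bullet> v1" using g1 True c_def \<open>a \<bullet> v1 < 0\<close> by simp
    qed
  next
    case False
    hence cn: "c < 0" using c0 by simp
    have "a \<bullet> v1 > 0" using v1 cn by (simp add: mult_less_0_iff)
    have mv: "- v0 \<in> int_lattice" using VtL[OF v0V] unfolding int_lattice_def by auto
    show ?thesis
    proof (rule base_core[OF VtT[OF v0V] VtT[OF v1(1)] mv])
      show "0 < a \<bullet> - v0" using cn c_def by simp
      show "2 * (a \<bullet> - v0) \<le> a \<bullet> v1 - a \<bullet> v0" using g1 cn c_def \<open>a \<bullet> v1 > 0\<close> by simp
    qed
  qed
qed

lemma Lam_nonneg: "j \<le> d \<Longrightarrow> Lam d j \<ge> 0"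
  unfolding Lam_def by (intro sum_nonneg) auto

lemma hit:
  fixes U :: "(real^'n::finite) set"
  assumes i: "2 \<le> i" "i \<le> CARD('n)"
    and U: "affine U" "aff_dim U = int (CARD('n) - i)"
  shows "\<exists>u\<in>U. \<exists>x\<in>terminal_simplex. \<exists>z\<in>int_lattice.
           u = (1/2 + Lam CARD('n) (i-1)) *\<^sub>R x + z"
proof -
  have "U \<noteq> {}" using U by auto
  then obtain u0 where u0: "u0 \<in> U" by blast
  define D where "D = (+) (- u0) ` U"
  have subD: "subspace D" unfolding D_def by (rule affine_diffs_subspace[OF U(1) u0])
  have "aff_dim U = int (dim D)" unfolding D_def
    by (rule aff_dim_eq_dim) (simp add: hull_inc u0)
  hence dimD: "dim D = CARD('n) - i" using U by simp
  obtain BD where BD: "BD \<subseteq> D" "independent BD" "D \<subseteq> span BD" "card BD = dim D"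
    by (rule basis_exists)
  have spanBD: "span BD = D" using BD subD by (simp add: span_subspace)
  obtain B where B: "BD \<subseteq> B" "B \<subseteq> BD \<union> Basis" "independent B" "BD \<union> Basis \<subseteq> span B"
    using maximal_independent_subset_extend[of BD "BD \<union> Basis"] BD(2) by blast
  have finB: "finite B" using independent_bound[OF B(3)] by simp
  have "span B = UNIV"
    using B(4) by (metis span_Basis span_mono span_span le_sup_iff top.extremum_uniqueI)
  hence cardB: "card B = CARD('n)"
    using dim_eq_card_independent[OF B(3)] dim_span[of B] by simp
  define E' where "E' = B - BD"
  have cE': "card E' = i" unfolding E'_def
    using card_Diff_subset[OF finite_subset[OF B(1) finB] B(1)] cardB BD(4) dimD i by simp
  obtain E where E: "E \<subseteq> E'" "card E = i - 1" "finite E"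
    using obtain_subset_with_card_n[of "i-1" E'] cE' by auto
  have EB: "E \<subseteq> Basis" using E(1) B(2) E'_def by auto
  define K where "K = {k. axis k (1::real) \<in> E}"
  have EK: "E = (\<lambda>k. axis k 1) ` K"
  proof
    show "E \<subseteq> (\<lambda>k. axis k 1) ` K"
    proof
      fix e assume "e \<in> E"
      hence "e \<in> Basis" using EB by auto
      then obtain k where "e = axis k (1::real)" unfolding Basis_vec_def by auto
      thus "e \<in> (\<lambda>k. axis k 1) ` K" using \<open>e \<in> E\<close> K_def by auto
    qed
  qed (auto simp: K_def)
  have cK: "card K = i - 1"
    using E(2) EK card_image[of "\<lambda>k. axis k (1::real)" K] by (simp add: inj_on_def axis_eq_axis)
  have finK: "finite K" by simp
  have indep: "independent (BD \<union> E)"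
    using B(1,3) E(1) E'_def independent_mono by blast
  have disj: "BD \<inter> E = {}" using E(1) E'_def by auto
  have cU: "card (BD \<union> E) = CARD('n) - 1"
    using card_Un_disjoint[OF finite_subset[OF B(1) finB] E(3) disj] BD(4) dimD E(2) i by simp
  have dimS: "dim (span (BD \<union> E)) = CARD('n) - 1"
    using dim_eq_card_independent[OF indep] cU by simp
  have "dim (BD \<union> E) < DIM(real^'n)" using dimS i by simp
  then obtain a :: "real^'n" where a: "a \<noteq> 0" "span (BD \<union> E) \<subseteq> {x. a \<bullet> x = 0}"
    using lowdim_subset_hyperplane by blast
  have Seq: "span (BD \<union> E) = {x. a \<bullet> x = 0}"
    by (rule subspace_dim_equal) (use a dimS dim_hyperplane[OF a(1)] subspace_hyperplane in auto)
  obtain p z0 where p: "p \<in> terminal_simplex" and z0: "z0 \<in> int_lattice"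
    and pe: "a \<bullet> ((1/2) *\<^sub>R p + z0) = a \<bullet> u0"
    using base[OF a(1), of "a \<bullet> u0"] by blast
  define x where "x = (1/2) *\<^sub>R p + z0"
  have "x - u0 \<in> span (BD \<union> E)" using Seq pe x_def by (simp add: inner_diff_right)
  then obtain \<delta> v where dv: "x - u0 = \<delta> + v" "\<delta> \<in> span BD" "v \<in> span E"
    unfolding span_Un by blast
  have "\<delta> \<in> D" using dv spanBD by simp
  then obtain u where u: "u \<in> U" "\<delta> = - u0 + u" unfolding D_def by auto
  have subK: "subspace {y :: real^'n. \<forall>k. k \<notin> K \<longrightarrow> y$k = 0}"
    unfolding subspace_def by auto
  have "E \<subseteq> {y :: real^'n. \<forall>k. k \<notin> K \<longrightarrow> y$k = 0}"
    using EK by (auto simp: axis_def)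
  hence "span E \<subseteq> {y :: real^'n. \<forall>k. k \<notin> K \<longrightarrow> y$k = 0}"
    using span_minimal subK by blast
  hence vK: "\<forall>k. k \<notin> K \<longrightarrow> (-v)$k = 0" using dv(3) by auto
  obtain z' t' where z': "z' \<in> int_lattice" and t': "t' \<in> terminal_simplex"
    and e: "-v - z' = Lam CARD('n) (card K) *\<^sub>R t'"
    using fill[OF finK] vK by blast
  have L0: "Lam CARD('n) (i-1) \<ge> 0" using Lam_nonneg i by simp
  obtain t where t: "t \<in> terminal_simplex"
    and te: "(1/2) *\<^sub>R p + Lam CARD('n) (i-1) *\<^sub>R t' = (1/2 + Lam CARD('n) (i-1)) *\<^sub>R t"
    using conv_comb[OF p t', of "1/2" "Lam CARD('n) (i-1)"] L0 by auto
  have "u = x - v" using dv u by (simp add: algebra_simps)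
  also have "\<dots> = (1/2) *\<^sub>R p + (-v - z') + (z0 + z')" by (simp add: x_def algebra_simps)
  also have "\<dots> = (1/2 + Lam CARD('n) (i-1)) *\<^sub>R t + (z0 + z')" using e te cK by simp
  finally show ?thesis using u(1) t lat_add[OF z0 z'] by blast
qed

theorem corollary5p6:
  fixes i :: nat
  assumes "2 \<le> i" and "i \<le> CARD('n::finite)"
  shows "covering_minimum i (terminal_simplex :: (real ^ 'n) set)
           \<le> 1/2 + (\<Sum>j = 0..i-2. (real CARD('n) - real j) / (real CARD('n) - real j + 1))"
proof -
  have eq: "{0..i-2} = {..<i-1}" using assms(1) by auto
  have R: "1/2 + (\<Sum>j = 0..i-2. (real CARD('n) - real j) / (real CARD('n) - real j + 1))
      = 1/2 + Lam CARD('n) (i-1)" unfolding Lam_def eq ..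
  have L0: "Lam CARD('n) (i-1) \<ge> 0" using Lam_nonneg assms by simp
  show ?thesis unfolding R covering_minimum_def
  proof (rule cInf_lower)
    show "bdd_below {\<mu>. \<mu> \<ge> 0 \<and>
      (\<forall>U. affine U \<and> aff_dim U = int (CARD('n) - i) \<longrightarrow>
         {\<mu> *\<^sub>R x + z | x z. x \<in> (terminal_simplex :: (real ^ 'n) set) \<and> z \<in> int_lattice} \<inter> U \<noteq> {})}"
      by (rule bdd_belowI[of _ 0]) auto
    show "1/2 + Lam CARD('n) (i-1) \<in> {\<mu>. \<mu> \<ge> 0 \<and>
      (\<forall>U. affine U \<and> aff_dim U = int (CARD('n) - i) \<longrightarrow>
         {\<mu> *\<^sub>R x + z | x z. x \<in> (terminal_simplex :: (real ^ 'n) set) \<and> z \<in> int_lattice} \<inter> U \<noteq> {})}"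
    proof (intro CollectI conjI allI impI)
      show "0 \<le> 1/2 + Lam CARD('n) (i-1)" using L0 by simp
      fix U :: "(real^'n) set" assume U: "affine U \<and> aff_dim U = int (CARD('n) - i)"
      then obtain u x z where "u \<in> U" "x \<in> terminal_simplex" "z \<in> int_lattice"
        "u = (1/2 + Lam CARD('n) (i-1)) *\<^sub>R x + z"
        using hit[OF assms, of U] by blast
      thus "{(1/2 + Lam CARD('n) (i-1)) *\<^sub>R x + z | x z. x \<in> (terminal_simplex :: (real ^ 'n) set) \<and> z \<in> int_lattice} \<inter> U \<noteq> {}"
        by blast
    qed
  qed
qed

end
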